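(* Let $\gamma\in\mathbb N\setminus\{1\}$, $b_1<b_2<\dots<b_\gamma$ real numbers, and $a\in C(\mathbb R,\mathbb R)$ with $a(x)=(\max\{x,0\})^\gamma$ for all $x\in\mathbb R$. Then (i) $(\mathcal R_a(\mathbf I_\gamma))(x)=x^\gamma$ for all $x\in\mathbb R$; (ii) there exist unique $c_0,\dots,c_\gamma\in\mathbb R$ such that for all $k\in\{0,1,\dots,\gamma\}$, $\mathbb 1_{\{\gamma\}}(k)c_0+\sum_{i=1}^\gamma c_i(b_i)^k=\mathbb 1_{\{\gamma-1\}}(k)\gamma^{-1}$; (iii) with these constants $\Psi=\mathbf A_{1,c_0}\bullet\bigl(\bigoplus_{i=1}^\gamma(c_i\circledast(\mathbf I_\gamma\bullet\mathbf A_{1,b_i}))\bigr)\in\mathbf N$ is well defined; (iv) $\mathcal D(\Psi)=(1,2\gamma,1)$; (v) $\mathcal R_a(\Psi)\in C(\mathbb R,\mathbb R)$; and (vi) $(\mathcal R_a(\Psi))(x)=x$ for all $x\in\mathbb R$.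
   Context: Artificial neural networks (ANNs). Let $\mathbb N=\{1,2,\dots\}$ and $\mathbf N=\bigcup_{L\in\mathbb N}\bigcup_{l_0,\dots,l_L\in\mathbb N}\prod_{k=1}^L(\mathbb R^{l_k\times l_{k-1}}\times\mathbb R^{l_k})$. For $\Phi=((W_1,B_1),\dots,(W_L,B_L))$ in the $(l_0,\dots,l_L)$ component, $\mathcal L(\Phi)=L$, $\mathcal I(\Phi)=l_0$, $\mathcal O(\Phi)=l_L$, $\mathcal D(\Phi)=(l_0,\dots,l_L)$. For $a\in C(\mathbb R,\mathbb R)$ the realization is $(\mathcal R_a(\Phi))(x_0)=W_Lx_{L-1}+B_L$ with $x_k=\mathfrak M_{a,l_k}(W_kx_{k-1}+B_k)$, $k=1,\dots,L-1$, $\mathfrak M_{a,m}$ applying $a$ componentwise. $\operatorname I_n$ is the identity matrix; $\mathbf A_{W,B}=((W,B))$ (for reals $w,b$, $\mathbf A_{w,b}$ has $1\times1$ weight $w$ and bias $b$). Composition: for $\Phi_1=((W_1,B_1),\dots,(W_L,B_L))$, $\Phi_2=((\mathscr W_1,\mathscr B_1),\dots,(\mathscr W_{\mathfrak L},\mathscr B_{\mathfrak L}))$ with $\mathcal I(\Phi_1)=\mathcal O(\Phi_2)$, $\Phi_1\bullet\Phi_2=((\mathscr W_1,\mathscr B_1),\dots,(\mathscr W_{\mathfrak L-1},\mathscr B_{\mathfrak L-1}),(W_1\mathscr W_{\mathfrak L},W_1\mathscr B_{\mathfrak L}+B_1),(W_2,B_2),\dots,(W_L,B_L))$. $\lambda\circledast\Phi=\mathbf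 A_{\lambda\operatorname I_{\mathcal O(\Phi)},0}\bullet\Phi$. $\mathbf P_n(\Phi_1,\dots,\Phi_n)$ (equal lengths) has $k$-th layer $(\operatorname{diag}(W_{1,k},\dots,W_{n,k}),(B_{1,k},\dots,B_{n,k}))$. $\mathfrak S_{m,n}=\mathbf A_{(\operatorname I_m\cdots\operatorname I_m),0}$, $\mathfrak T_{m,n}=\mathbf A_{(\operatorname I_m\cdots\operatorname I_m)^\top,0}$ ($n$ blocks). For $\Phi_u,\dots,\Phi_v$ with equal $\mathcal L,\mathcal I,\mathcal O$: $\bigoplus_{k=u}^v\Phi_k=\mathfrak S_{\mathcal O(\Phi_u),v-u+1}\bullet([\mathbf P_{v-u+1}(\Phi_u,\dots,\Phi_v)]\bullet\mathfrak T_{\mathcal I(\Phi_u),v-u+1})$. For $\gamma\in\mathbb N_0$, $\mathbf I_\gamma=\bigl(\bigl(\begin{pmatrix}1\\-1\end{pmatrix},\begin{pmatrix}0\\0\end{pmatrix}\bigr),\bigl(\begin{pmatrix}1&(-1)^\gamma\end{pmatrix},0\bigr)\bigr)\in(\mathbb R^{2\times1}\times\mathbb R^2)\times(\mathbb R^{1\times2}\times\mathbb R^1)$. *)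

theory Defs
  imports Complex_Main "Jordan_Normal_Form.Matrix"
begin

text \<open>An ANN is a list of layers (W_k, B_k); real matrices/vectors from Jordan_Normal_Form.\<close>
type_synonym ann = "(real mat \<times> real vec) list"

definition ann_dims :: "ann \<Rightarrow> nat list" where
  "ann_dims \<Phi> = dim_col (fst (hd \<Phi>)) # map (\<lambda>l. dim_row (fst l)) \<Phi>"

definition ann_len :: "ann \<Rightarrow> nat" where "ann_len \<Phi> = length \<Phi>"
definition ann_in :: "ann \<Rightarrow> nat" where "ann_in \<Phi> = dim_col (fst (hd \<Phi>))"
definition ann_out :: "ann \<Rightarrow> nat" where "ann_out \<Phi> = dim_row (fst (last \<Phi>))"

text \<open>Membership in the set \<open>\<bold>N\<close> of ANNs (all layer dimensions in {1,2,...}).\<close>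
definition is_ann :: "ann \<Rightarrow> bool" where
  "is_ann \<Phi> \<longleftrightarrow> \<Phi> \<noteq> [] \<and>
     (\<forall>k < length \<Phi>. dim_vec (snd (\<Phi> ! k)) = dim_row (fst (\<Phi> ! k))) \<and>
     (\<forall>k. Suc k < length \<Phi> \<longrightarrow> dim_col (fst (\<Phi> ! Suc k)) = dim_row (fst (\<Phi> ! k))) \<and>
     (\<forall>d \<in> set (ann_dims \<Phi>). 1 \<le> d)"

text \<open>Realization: activation applied componentwise after all but the last layer.\<close>
fun realize :: "(real \<Rightarrow> real) \<Rightarrow> ann \<Rightarrow> real vec \<Rightarrow> real vec" where
  "realize a [] x = x"
| "realize a [(W, B)] x = mult_mat_vec W x + B"
| "realize a ((W, B) # l # ls) x = realize a (l # ls) (map_vec a (mult_mat_vec W x + B))"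

definition affine_ann :: "real mat \<Rightarrow> real vec \<Rightarrow> ann" where
  "affine_ann W B = [(W, B)]"

definition affine1 :: "real \<Rightarrow> real \<Rightarrow> ann" where
  "affine1 w b = affine_ann (mat 1 1 (\<lambda>_. w)) (vec 1 (\<lambda>_. b))"

text \<open>Composition \<open>\<Phi>1 \<bullet> \<Phi>2\<close>.\<close>
definition comp_ann :: "ann \<Rightarrow> ann \<Rightarrow> ann" where
  "comp_ann \<Phi>1 \<Phi>2 =
     butlast \<Phi>2 @
     [(fst (hd \<Phi>1) * fst (last \<Phi>2), mult_mat_vec (fst (hd \<Phi>1)) (snd (last \<Phi>2)) + snd (hd \<Phi>1))]
     @ tl \<Phi>1"

definition scal_ann :: "real \<Rightarrow> ann \<Rightarrow> ann" where
  "scal_ann r \<Phi> = comp_ann (affine_ann (r \<cdot>\<^sub>m 1\<^sub>m (ann_out \<Phi>)) (0\<^sub>v (ann_out \<Phi>))) \<Phi>"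

fun blockdiag :: "real mat list \<Rightarrow> real mat" where
  "blockdiag [] = 0\<^sub>m 0 0"
| "blockdiag (M # Ms) = four_block_mat M (0\<^sub>m (dim_row M) (dim_col (blockdiag Ms)))
                          (0\<^sub>m (dim_row (blockdiag Ms)) (dim_col M)) (blockdiag Ms)"

fun vconcat :: "real vec list \<Rightarrow> real vec" where
  "vconcat [] = 0\<^sub>v 0"
| "vconcat (v # vs) = v @\<^sub>v vconcat vs"

text \<open>Parallelization \<open>\<bold>P\<^sub>n(\<Phi>_1,...,\<Phi>_n)\<close> of networks of equal length.\<close>
definition par_ann :: "ann list \<Rightarrow> ann" where
  "par_ann \<Phi>s = map (\<lambda>k. (blockdiag (map (\<lambda>\<Phi>. fst (\<Phi> ! k)) \<Phi>s),
                           vconcat (map (\<lambda>\<Phi>. snd (\<Phi> ! k)) \<Phi>s)))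
                  [0..<length (hd \<Phi>s)]"

text \<open>\<open>\<frak>S_{m,n}\<close> = A with (I_m ... I_m), \<open>\<frak>T_{m,n}\<close> = A with its transpose.\<close>
definition sum_ann :: "nat \<Rightarrow> nat \<Rightarrow> ann" where
  "sum_ann m n = affine_ann (mat m (m * n) (\<lambda>(i, j). if i = j mod m then 1 else 0)) (0\<^sub>v m)"

definition trans_ann :: "nat \<Rightarrow> nat \<Rightarrow> ann" where
  "trans_ann m n = affine_ann (mat (m * n) m (\<lambda>(i, j). if j = i mod m then 1 else 0)) (0\<^sub>v (m * n))"

text \<open>Sum of networks \<open>\<Phi>_u \<oplus> ... \<oplus> \<Phi>_v\<close> (given as nonempty list).\<close>
definition osum_ann :: "ann list \<Rightarrow> ann" where
  "osum_ann \<Phi>s = comp_ann (sum_ann (ann_out (hd \<Phi>s)) (length \<Phi>s))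
                   (comp_ann (par_ann \<Phi>s) (trans_ann (ann_in (hd \<Phi>s)) (length \<Phi>s)))"

text \<open>The network \<open>\<bold>I\<^sub>\<gamma>\<close>.\<close>
definition I_ann :: "nat \<Rightarrow> ann" where
  "I_ann \<gamma> = [(mat 2 1 (\<lambda>(i, j). if i = 0 then 1 else -1), 0\<^sub>v 2),
              (mat 1 2 (\<lambda>(i, j). if j = 0 then 1 else (-1) ^ \<gamma>), 0\<^sub>v 1)]"

text \<open>The network \<open>\<Psi>\<close> built from constants c_0..c_\<gamma> (list c of length \<gamma>+1) and b_1..b_\<gamma>.\<close>
definition Psi_ann :: "nat \<Rightarrow> (nat \<Rightarrow> real) \<Rightarrow> real list \<Rightarrow> ann" where
  "Psi_ann \<gamma> b c = comp_ann (affine1 1 (c ! 0))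
      (osum_ann (map (\<lambda>i. scal_ann (c ! i) (comp_ann (I_ann \<gamma>) (affine1 1 (b i)))) [1..<\<gamma>+1]))"

end

theory Submission
  imports Defs "HOL-Computational_Algebra.Polynomial" "Jordan_Normal_Form.Determinant"
begin


lemma sum_shift1: "(\<Sum>i=1..n. f i) = (\<Sum>i<n. f (Suc i) :: 'a::comm_monoid_add)"
  by (induct n) (auto simp: atLeastLessThanSuc_atLeastAtMost[symmetric] sum.atLeastLessThan_Suc)

lemma vand_inj:
  fixes b d :: "nat \<Rightarrow> real" and n :: nat
  assumes dist: "\<And>i j. 1 \<le> i \<Longrightarrow> i < j \<Longrightarrow> j \<le> n \<Longrightarrow> b i < b j"
  and hom: "\<And>k. k < n \<Longrightarrow> (\<Sum>i=1..n. d i * b i ^ k) = 0"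
  and j: "j \<in> {1..n}"
  shows "d j = 0"
proof -
  define p where "p = (\<Prod>i\<in>{1..n}-{j}. [:- b i, 1:])"
  have inj: "b i \<noteq> b l" if "i\<in>{1..n}" "l\<in>{1..n}" "i \<noteq> l" for i l
  proof (cases "i < l")
    case True then show ?thesis using dist[of i l] that by auto
  next
    case False then have "l < i" using that by auto
    then show ?thesis using dist[of l i] that by auto
  qed
  have "degree p \<le> sum (degree \<circ> (\<lambda>i. [:- b i, 1:])) ({1..n}-{j})"
    unfolding p_def by (rule degree_prod_sum_le) auto
  also have "\<dots> = card ({1..n}-{j})" by simp
  also have "\<dots> = n - 1" using j by simp
  finally have deg: "degree p < n" using j by auto
  have poly_eq: "poly p x = (\<Sum>k<n. coeff p k * x^k)" for x
  proof -
    have "poly p x = (\<Sum>k\<le>degree p. coeff p k * x^k)" by (rule poly_altdef)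
    also have "\<dots> = (\<Sum>k<n. coeff p k * x^k)"
      by (rule sum.mono_neutral_left) (use deg in \<open>auto simp: coeff_eq_0\<close>)
    finally show ?thesis .
  qed
  have "(\<Sum>i=1..n. d i * poly p (b i)) = (\<Sum>k<n. coeff p k * (\<Sum>i=1..n. d i * b i ^ k))"
    by (simp add: poly_eq sum_distrib_left sum_distrib_right mult_ac) (rule sum.swap)
  also have "\<dots> = 0" using hom by simp
  finally have S: "(\<Sum>i=1..n. d i * poly p (b i)) = 0" .
  have pp: "poly p (b i) = (\<Prod>l\<in>{1..n}-{j}. b i - b l)" for i
    by (simp add: p_def poly_prod)
  have "(\<Sum>i=1..n. d i * poly p (b i)) = d j * poly p (b j)"
  proof (rule sum.remove[OF _ j, THEN trans])
    show "finite {1..n}" by simp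
    have "(\<Sum>i\<in>{1..n}-{j}. d i * poly p (b i)) = 0"
      by (rule sum.neutral) (auto simp: pp intro!: prod_zero)
    then show "d j * poly p (b j) + (\<Sum>i\<in>{1..n}-{j}. d i * poly p (b i)) = d j * poly p (b j)" by simp
  qed
  moreover have "poly p (b j) \<noteq> 0"
    unfolding pp using inj j by (auto simp: prod_zero_iff)
  ultimately show ?thesis using S by simp
qed

lemma ex1_c:
  fixes b :: "nat \<Rightarrow> real" and \<gamma> :: nat
  assumes g: "\<gamma> \<ge> 1"
  and dist: "\<And>i j. 1 \<le> i \<Longrightarrow> i < j \<Longrightarrow> j \<le> \<gamma> \<Longrightarrow> b i < b j"
  shows "\<exists>!c :: real list. length c = \<gamma> + 1 \<and>
          (\<forall>k \<in> {0..\<gamma>}. (if k = \<gamma> then c ! 0 else 0) + (\<Sum>i = 1..\<gamma>. c ! i * b i ^ k)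
                        = (if k = \<gamma> - 1 then 1 / real \<gamma> else 0))" (is "\<exists>!c. ?P c")
proof (rule ex_ex1I)
  define A where "A = mat \<gamma> \<gamma> (\<lambda>(k,i). b (i+1) ^ k)"
  have A: "A \<in> carrier_mat \<gamma> \<gamma>" by (simp add: A_def)
  have Av: "(A *\<^sub>v v) $ k = (\<Sum>i=1..\<gamma>. v $ (i - 1) * b i ^ k)" if "k < \<gamma>" "v \<in> carrier_vec \<gamma>" for k v
    using that unfolding sum_shift1 by (simp add: A_def scalar_prod_def atLeast0LessThan mult.commute)
  have "det A \<noteq> 0"
  proof
    assume "det A = 0"
    then obtain v where v: "v \<in> carrier_vec \<gamma>" "v \<noteq> 0\<^sub>v \<gamma>" "A *\<^sub>v v = 0\<^sub>v \<gamma>"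
      using det_0_iff_vec_prod_zero[OF A] by auto
    have "v $ (j - 1) = 0" if "j \<in> {1..\<gamma>}" for j
    proof (rule vand_inj[of \<gamma> b "\<lambda>i. v $ (i - 1)", OF dist _ that])
      fix k assume "k < \<gamma>"
      then show "(\<Sum>i=1..\<gamma>. v $ (i - 1) * b i ^ k) = 0" using Av[OF _ v(1)] v(3) by (metis index_zero_vec(1))
    qed auto
    then have "v = 0\<^sub>v \<gamma>" using v(1)
    proof (intro eq_vecI)
      fix i assume h: "\<And>j. j \<in> {1..\<gamma>} \<Longrightarrow> v $ (j - 1) = 0" and "i < dim_vec (0\<^sub>v \<gamma>)"
      then show "v $ i = 0\<^sub>v \<gamma> $ i" using h[of "Suc i"] by simp
    qed simp
    with v(2) show False by simp
  qed
  then obtain B where B: "B \<in> carrier_mat \<gamma> \<gamma>" "A * B = 1\<^sub>m \<gamma>"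
    using det_non_zero_imp_unit[OF A] unfolding Units_def ring_mat_def by auto
  define r where "r = vec \<gamma> (\<lambda>k. if k = \<gamma> - 1 then 1 / real \<gamma> else (0::real))"
  define s where "s = B *\<^sub>v r"
  have s: "s \<in> carrier_vec \<gamma>" using B by (simp add: s_def r_def)
  have As: "A *\<^sub>v s = r" unfolding s_def
    using B A by (subst assoc_mult_mat_vec[symmetric]) (auto simp: r_def)
  define c where "c = (- (\<Sum>i=1..\<gamma>. s $ (i - 1) * b i ^ \<gamma>)) # map (\<lambda>i. s $ i) [0..<\<gamma>]"
  have ci: "c ! i = s $ (i - 1)" if "i \<in> {1..\<gamma>}" for i
    using that by (cases i) (auto simp: c_def)
  have sums: "(\<Sum>i = 1..\<gamma>. c ! i * b i ^ k) = (\<Sum>i=1..\<gamma>. s $ (i - 1) * b i ^ k)" for k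
    by (rule sum.cong) (auto simp: ci)
  show "\<exists>c. ?P c"
  proof (intro exI[of _ c] conjI ballI)
    show "length c = \<gamma> + 1" by (simp add: c_def)
    fix k assume k: "k \<in> {0..\<gamma>}"
    show "(if k = \<gamma> then c ! 0 else 0) + (\<Sum>i = 1..\<gamma>. c ! i * b i ^ k)
                        = (if k = \<gamma> - 1 then 1 / real \<gamma> else 0)"
    proof (cases "k = \<gamma>")
      have c0: "c ! 0 = - (\<Sum>i=1..\<gamma>. s $ (i - 1) * b i ^ \<gamma>)" by (simp add: c_def)
      case True then show ?thesis using g by (simp only: sums c0) simp
    next
      case False then have "k < \<gamma>" using k by auto
      then have e1: "(\<Sum>i=1..\<gamma>. s $ (i - 1) * b i ^ k) = r $ k" using Av[OF _ s, of k] As by simp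
      have e2: "r $ k = (if k = \<gamma> - 1 then 1 / real \<gamma> else 0)" using \<open>k < \<gamma>\<close> by (simp add: r_def)
      show ?thesis using False by (simp only: sums e1 e2 if_False add_0)
    qed
  qed
next
  fix c c' assume P: "?P c" and P': "?P c'"
  have eq: "c ! j = c' ! j" if "j \<in> {1..\<gamma>}" for j
  proof -
    have "(\<lambda>i. c ! i - c' ! i) j = 0"
    proof (rule vand_inj[of \<gamma> b, OF dist _ that])
      fix k assume k: "k < \<gamma>"
      have "(\<Sum>i = 1..\<gamma>. (c ! i - c' ! i) * b i ^ k) = (\<Sum>i = 1..\<gamma>. c ! i * b i ^ k) - (\<Sum>i = 1..\<gamma>. c' ! i * b i ^ k)"
        by (simp add: sum_subtractf left_diff_distrib)
      also have "\<dots> = 0"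
      proof -
        have h1: "(if k = \<gamma> then c ! 0 else 0) + (\<Sum>i = 1..\<gamma>. c ! i * b i ^ k) = (if k = \<gamma> - 1 then 1 / real \<gamma> else 0)"
          using P[THEN conjunct2, THEN bspec, of k] k by simp
        have h2: "(if k = \<gamma> then c' ! 0 else 0) + (\<Sum>i = 1..\<gamma>. c' ! i * b i ^ k) = (if k = \<gamma> - 1 then 1 / real \<gamma> else 0)"
          using P'[THEN conjunct2, THEN bspec, of k] k by simp
        show ?thesis using h1 h2 k by simp
      qed
      finally show "(\<Sum>i = 1..\<gamma>. (c ! i - c' ! i) * b i ^ k) = 0" .
    qed auto
    then show ?thesis by simp
  qed
  have "(\<Sum>i = 1..\<gamma>. c ! i * b i ^ \<gamma>) = (\<Sum>i = 1..\<gamma>. c' ! i * b i ^ \<gamma>)"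
    by (rule sum.cong) (auto simp: eq)
  moreover have "c ! 0 + (\<Sum>i = 1..\<gamma>. c ! i * b i ^ \<gamma>) = c' ! 0 + (\<Sum>i = 1..\<gamma>. c' ! i * b i ^ \<gamma>)"
  proof -
    have h1: "(if \<gamma> = \<gamma> then c ! 0 else 0) + (\<Sum>i = 1..\<gamma>. c ! i * b i ^ \<gamma>) = (if \<gamma> = \<gamma> - 1 then 1 / real \<gamma> else 0)"
      using P[THEN conjunct2, THEN bspec, of \<gamma>] by simp
    have h2: "(if \<gamma> = \<gamma> then c' ! 0 else 0) + (\<Sum>i = 1..\<gamma>. c' ! i * b i ^ \<gamma>) = (if \<gamma> = \<gamma> - 1 then 1 / real \<gamma> else 0)"
      using P'[THEN conjunct2, THEN bspec, of \<gamma>] by simp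
    show ?thesis using h1 h2 by simp
  qed
  ultimately have e0: "c ! 0 = c' ! 0" by simp
  show "c = c'"
  proof (rule nth_equalityI)
    show "length c = length c'" using P P' by simp
    fix i assume "i < length c"
    then show "c ! i = c' ! i" using P e0 eq[of i] by (cases i) auto
  qed
qed



definition Wh :: "real mat" where "Wh = mat 2 1 (\<lambda>(i, j). if i = 0 then 1 else -1)"
definition Bv :: "real \<Rightarrow> real vec" where "Bv bb = vec 2 (\<lambda>i. if i = 0 then bb else -bb)"
definition Vm :: "nat \<Rightarrow> real \<Rightarrow> real mat" where
  "Vm g cc = mat 1 2 (\<lambda>(i, j). cc * (if j = 0 then 1 else (-1) ^ g))"

lemma Phi_eq: "scal_ann cc (comp_ann (I_ann g) (affine1 1 bb)) = [(Wh, Bv bb), (Vm g cc, 0\<^sub>v 1)]"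
  unfolding scal_ann_def comp_ann_def affine_ann_def affine1_def I_ann_def ann_out_def
  by (auto simp: Wh_def Bv_def Vm_def scalar_prod_def intro!: eq_matI eq_vecI)

lemma blockdiag_carrier: "(\<forall>M\<in>set Ms. M \<in> carrier_mat r s) \<Longrightarrow> blockdiag Ms \<in> carrier_mat (length Ms * r) (length Ms * s)"
  by (induct Ms) auto

lemma blockdiag_index:
  assumes "\<forall>M\<in>set Ms. M \<in> carrier_mat r s" "0 < r" "0 < s" "i < length Ms * r" "j < length Ms * s"
  shows "blockdiag Ms $$ (i,j) = (if i div r = j div s then (Ms ! (i div r)) $$ (i mod r, j mod s) else 0)"
  using assms
proof (induct Ms arbitrary: i j)
  case Nil then show ?case by simp
next
  case (Cons M Ms)
  have M: "M \<in> carrier_mat r s" using Cons by simp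
  then have Md: "dim_row M = r" "dim_col M = s" by auto
  have BD: "blockdiag Ms \<in> carrier_mat (length Ms * r) (length Ms * s)" using Cons blockdiag_carrier by auto
  show ?case
  proof (cases "i < r")
    case True
    show ?thesis
    proof (cases "j < s")
      case True2: True
      then show ?thesis using True M BD Cons.prems by (simp add: index_mat_four_block Md)
    next
      case False
      then have "j div s \<noteq> 0" using Cons.prems by (simp add: div_eq_0_iff)
      then show ?thesis using True False M BD Cons.prems by (simp add: index_mat_four_block Md)
    qed
  next
    case False
    note F = False
    show ?thesis
    proof (cases "j < s")
      case True
      then have "i div r \<noteq> 0" using F Cons.prems by (simp add: div_eq_0_iff)
      then show ?thesis using True F M BD Cons.prems by (simp add: index_mat_four_block Md)
    next
      case False
      have i: "i div r = Suc ((i - r) div r)" "i mod r = (i - r) mod r"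
        using F Cons.prems by (auto simp: le_div_geq le_mod_geq)
      have j: "j div s = Suc ((j - s) div s)" "j mod s = (j - s) mod s"
        using False Cons.prems by (auto simp: le_div_geq le_mod_geq)
      have IH: "blockdiag Ms $$ (i - r, j - s) = (if (i - r) div r = (j - s) div s then (Ms ! ((i - r) div r)) $$ ((i - r) mod r, (j - s) mod s) else 0)"
        using Cons F False by auto
      show ?thesis using F False M BD Cons.prems IH i j by (simp add: index_mat_four_block Md)
    qed
  qed
qed

lemma vconcat_carrier: "(\<forall>v\<in>set vs. v \<in> carrier_vec r) \<Longrightarrow> vconcat vs \<in> carrier_vec (length vs * r)"
  by (induct vs) auto

lemma vconcat_index:
  assumes "\<forall>v\<in>set vs. v \<in> carrier_vec r" "0 < r" "i < length vs * r"
  shows "vconcat vs $ i = (vs ! (i div r)) $ (i mod r)"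
  using assms
proof (induct vs arbitrary: i)
  case Nil then show ?case by simp
next
  case (Cons v vs)
  have BD: "vconcat vs \<in> carrier_vec (length vs * r)" using Cons vconcat_carrier by auto
  show ?case
  proof (cases "i < r")
    case True then show ?thesis using BD Cons.prems by auto
  next
    case False
    have i: "i div r = Suc ((i - r) div r)" "i mod r = (i - r) mod r"
      using False Cons.prems by (auto simp: le_div_geq le_mod_geq)
    show ?thesis using False BD Cons i by auto
  qed
qed

lemma vconcat_zero: "vconcat (map (\<lambda>_. 0\<^sub>v 1) xs) = 0\<^sub>v (length xs)"
  by (induct xs) (auto intro!: eq_vecI)

lemma pair_sum: "(\<Sum>j<2*(n::nat). f j) = (\<Sum>i<n. f (2*i) + f (2*i+1) :: 'a::comm_monoid_add)"
  by (induct n) (auto simp: add.assoc)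

lemma osum_eq:
  "osum_ann (map (\<lambda>i. [(Wh, Bv (b i)), (Vm g (c ! i), 0\<^sub>v 1)]) (x # ys)) =
    [(blockdiag (map (\<lambda>i. Wh) (x # ys)) * mat (1 * length (x # ys)) 1 (\<lambda>(i, j). if j = i mod 1 then 1 else 0),
      blockdiag (map (\<lambda>i. Wh) (x # ys)) *\<^sub>v 0\<^sub>v (1 * length (x # ys)) + vconcat (map (\<lambda>i. Bv (b i)) (x # ys))),
     (mat 1 (1 * length (x # ys)) (\<lambda>(i, j). if i = j mod 1 then 1 else 0) * blockdiag (map (\<lambda>i. Vm g (c ! i)) (x # ys)),
      mat 1 (1 * length (x # ys)) (\<lambda>(i, j). if i = j mod 1 then 1 else 0) *\<^sub>v vconcat (map (\<lambda>i. 0\<^sub>v 1) (x # ys)) + 0\<^sub>v 1)]"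
proof -
  have t: "[0..<2::nat] = [0,1]" by (simp add: upt_rec)
  show ?thesis
    unfolding osum_ann_def
    by (simp add: comp_ann_def par_ann_def sum_ann_def trans_ann_def affine_ann_def
         ann_out_def ann_in_def o_def t Wh_def Vm_def del: blockdiag.simps vconcat.simps)
qed


lemma pow_split: "(g::nat) \<ge> 1 \<Longrightarrow> (max y 0)^g + (-1)^g * (max (-y) 0)^g = (y::real)^g"
proof (cases "y \<ge> 0")
  case True
  assume "g \<ge> 1"
  then show ?thesis using True by (simp add: max_def)
next
  case False
  assume "g \<ge> 1"
  then have "(-1)^g * (-y)^g = y^g" by (simp add: power_mult_distrib[symmetric])
  then show ?thesis using False \<open>g \<ge> 1\<close> by (simp add: max_def)
qed

lemma net_main:
  fixes \<gamma> :: nat and b :: "nat \<Rightarrow> real" and a :: "real \<Rightarrow> real" and c :: "real list"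
  assumes g: "\<gamma> \<ge> 1" and a: "\<And>x. a x = (max x 0) ^ \<gamma>"
  shows "is_ann (Psi_ann \<gamma> b c) \<and> ann_dims (Psi_ann \<gamma> b c) = [1, 2 * \<gamma>, 1]
     \<and> (\<forall>x. realize a (Psi_ann \<gamma> b c) (vec 1 (\<lambda>_. x)) = vec 1 (\<lambda>_. c!0 + (\<Sum>i=1..\<gamma>. c!i * (x + b i)^\<gamma>)))"
proof -
  have u0: "[1..<\<gamma>+1] = 1 # [Suc 1..<\<gamma>+1]" using g by (intro upt_conv_Cons) simp
  define ys where "ys = [Suc 1..<\<gamma>+1]"
  define xs where "xs = 1 # ys"
  have xsu: "[1..<\<gamma>+1] = xs" using u0 by (simp add: xs_def ys_def)
  have n: "length xs = \<gamma>" using xsu[symmetric] by simp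
  have xsi: "xs ! k = Suc k" if "k < \<gamma>" for k unfolding xsu[symmetric] using that by (subst nth_upt) auto
  define P0 where "P0 = blockdiag (map (\<lambda>i. Wh) xs)"
  define T where "T = (mat (1 * \<gamma>) 1 (\<lambda>(i, j). if j = i mod 1 then 1 else 0) :: real mat)"
  define B0 where "B0 = vconcat (map (\<lambda>i. Bv (b i)) xs)"
  define S where "S = (mat 1 (1 * \<gamma>) (\<lambda>(i, j). if i = j mod 1 then 1 else 0) :: real mat)"
  define P1 where "P1 = blockdiag (map (\<lambda>i. Vm \<gamma> (c ! i)) xs)"
  define Bz where "Bz = vconcat (map (\<lambda>i. 0\<^sub>v 1) xs)"
  define M1 where "M1 = (mat 1 1 (\<lambda>_. 1) :: real mat)"
  have o: "osum_ann (map (\<lambda>i. [(Wh, Bv (b i)), (Vm \<gamma> (c ! i), 0\<^sub>v 1)]) xs) =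
    [(P0 * T, P0 *\<^sub>v 0\<^sub>v (1*\<gamma>) + B0), (S * P1, S *\<^sub>v Bz + 0\<^sub>v 1)]"
    using osum_eq[of b \<gamma> c 1 ys] unfolding xs_def[symmetric] n P0_def T_def B0_def S_def P1_def Bz_def .
  have Psi: "Psi_ann \<gamma> b c = [(P0 * T, P0 *\<^sub>v 0\<^sub>v (1*\<gamma>) + B0),
                              (M1 * (S * P1), M1 *\<^sub>v (S *\<^sub>v Bz + 0\<^sub>v 1) + vec 1 (\<lambda>_. c ! 0))]"
    unfolding Psi_ann_def xsu Phi_eq o
    unfolding comp_ann_def affine1_def affine_ann_def M1_def
    by (simp only: list.sel butlast.simps last.simps append.simps fst_conv snd_conv if_True if_False list.distinct refl)
  have Whc: "Wh \<in> carrier_mat 2 1" by (simp add: Wh_def)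
  have Vc: "Vm \<gamma> cc \<in> carrier_mat 1 2" for cc by (simp add: Vm_def)
  have P0c: "P0 \<in> carrier_mat (\<gamma>*2) (\<gamma>*1)" unfolding P0_def using blockdiag_carrier[of "map (\<lambda>i. Wh) xs" 2 1] Whc n by auto
  have P1c: "P1 \<in> carrier_mat (\<gamma>*1) (\<gamma>*2)" unfolding P1_def using blockdiag_carrier[of "map (\<lambda>i. Vm \<gamma> (c ! i)) xs" 1 2] Vc n by auto
  have B0c: "B0 \<in> carrier_vec (\<gamma>*2)" unfolding B0_def using vconcat_carrier[of "map (\<lambda>i. Bv (b i)) xs" 2] n by (auto simp: Bv_def)
  have Bz: "Bz = 0\<^sub>v \<gamma>" unfolding Bz_def using vconcat_zero[of xs] n by simp
  have P0i: "P0 $$ (j, l) = (if j div 2 = l then Wh $$ (j mod 2, 0) else 0)" if "j < \<gamma>*2" "l < \<gamma>" for j l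
  proof -
    have "P0 $$ (j, l) = (if j div 2 = l div 1 then (map (\<lambda>i. Wh) xs ! (j div 2)) $$ (j mod 2, l mod 1) else 0)"
      unfolding P0_def by (rule blockdiag_index) (use that n Whc in auto)
    then show ?thesis using that n by (auto simp: less_mult_imp_div_less)
  qed
  have P1i: "P1 $$ (l, j) = (if l = j div 2 then Vm \<gamma> (c ! Suc l) $$ (0, j mod 2) else 0)" if "j < \<gamma>*2" "l < \<gamma>" for j l
  proof -
    have "P1 $$ (l, j) = (if l div 1 = j div 2 then (map (\<lambda>i. Vm \<gamma> (c ! i)) xs ! (l div 1)) $$ (l mod 1, j mod 2) else 0)"
      unfolding P1_def by (rule blockdiag_index) (use that n Vc in auto)
    then show ?thesis using that n xsi by auto
  qed
  have B0i: "B0 $ j = Bv (b (Suc (j div 2))) $ (j mod 2)" if "j < \<gamma>*2" for j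
  proof -
    have "B0 $ j = (map (\<lambda>i. Bv (b i)) xs ! (j div 2)) $ (j mod 2)"
      unfolding B0_def by (rule vconcat_index) (use that n in \<open>auto simp: Bv_def\<close>)
    then show ?thesis using that n xsi by (auto simp: less_mult_imp_div_less)
  qed
  have PT: "(P0 * T) $$ (j, 0) = (if j mod 2 = 0 then 1 else -1)" if j: "j < \<gamma>*2" for j
  proof -
    have "(P0 * T) $$ (j, 0) = (\<Sum>l\<in>{0..<\<gamma>}. P0 $$ (j, l) * T $$ (l, 0))"
      using P0c j by (simp add: T_def scalar_prod_def)
    also have "\<dots> = (\<Sum>l\<in>{0..<\<gamma>}. if j div 2 = l then Wh $$ (j mod 2, 0) else 0)"
      by (rule sum.cong) (auto simp: P0i j T_def)
    also have "\<dots> = Wh $$ (j mod 2, 0)" using j by (simp add: less_mult_imp_div_less)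
    also have "\<dots> = (if j mod 2 = 0 then 1 else -1)" by (simp add: Wh_def)
    finally show ?thesis .
  qed
  have Qi: "(M1 * (S * P1)) $$ (0, j) = Vm \<gamma> (c ! Suc (j div 2)) $$ (0, j mod 2)" if j: "j < \<gamma>*2" for j
  proof -
    have "(S * P1) $$ (0, j) = (\<Sum>l\<in>{0..<\<gamma>}. S $$ (0, l) * P1 $$ (l, j))"
      using P1c j by (simp add: S_def scalar_prod_def)
    also have "\<dots> = (\<Sum>l\<in>{0..<\<gamma>}. if l = j div 2 then Vm \<gamma> (c ! Suc l) $$ (0, j mod 2) else 0)"
      by (rule sum.cong) (auto simp: P1i j S_def)
    also have "\<dots> = Vm \<gamma> (c ! Suc (j div 2)) $$ (0, j mod 2)" using j by (simp add: less_mult_imp_div_less)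
    finally have e: "(S * P1) $$ (0, j) = Vm \<gamma> (c ! Suc (j div 2)) $$ (0, j mod 2)" .
    have "(M1 * (S * P1)) $$ (0, j) = (S * P1) $$ (0, j)"
      using P1c j by (simp add: M1_def S_def scalar_prod_def)
    then show ?thesis using e by simp
  qed
  have dims: "dim_row (P0 * T) = \<gamma>*2" "dim_col (P0 * T) = 1" "dim_row (M1 * (S * P1)) = 1"
     "dim_col (M1 * (S * P1)) = \<gamma>*2" using P0c P1c by (auto simp: T_def M1_def)
  have part1: "is_ann (Psi_ann \<gamma> b c) \<and> ann_dims (Psi_ann \<gamma> b c) = [1, 2 * \<gamma>, 1]"
    unfolding Psi is_ann_def ann_dims_def using dims B0c g
    by (auto simp: nth_Cons' M1_def)
  have part2: "realize a (Psi_ann \<gamma> b c) (vec 1 (\<lambda>_. x)) = vec 1 (\<lambda>_. c!0 + (\<Sum>i=1..\<gamma>. c!i * (x + b i)^\<gamma>))" for x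
  proof -
    define h where "h = map_vec a ((P0 * T) *\<^sub>v vec 1 (\<lambda>_. x) + (P0 *\<^sub>v 0\<^sub>v (1*\<gamma>) + B0))"
    have hd: "dim_vec h = \<gamma>*2" using B0c by (simp add: h_def)
    have hi: "h $ j = a ((if j mod 2 = 0 then 1 else -1) * x + Bv (b (Suc (j div 2))) $ (j mod 2))" if j: "j < \<gamma>*2" for j
    proof -
      have "((P0 * T) *\<^sub>v vec 1 (\<lambda>_. x)) $ j = (P0 * T) $$ (j, 0) * x"
        using j dims by (simp add: scalar_prod_def)
      moreover have "(P0 *\<^sub>v 0\<^sub>v (1*\<gamma>)) $ j = 0" using j P0c by (simp add: scalar_prod_def)
      ultimately show ?thesis using j B0c by (simp add: h_def PT B0i)
    qed
    have out: "realize a (Psi_ann \<gamma> b c) (vec 1 (\<lambda>_. x)) = M1 * (S * P1) *\<^sub>v h + (M1 *\<^sub>v (S *\<^sub>v Bz + 0\<^sub>v 1) + vec 1 (\<lambda>_. c ! 0))"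
      unfolding Psi h_def by simp
    have bias: "M1 *\<^sub>v (S *\<^sub>v Bz + 0\<^sub>v 1) + vec 1 (\<lambda>_. c ! 0) = vec 1 (\<lambda>_. c ! 0)"
      by (auto simp: Bz M1_def S_def scalar_prod_def intro!: eq_vecI)
    have main: "(M1 * (S * P1) *\<^sub>v h) $ 0 = (\<Sum>i=1..\<gamma>. c!i * (x + b i)^\<gamma>)"
    proof -
      have "(M1 * (S * P1) *\<^sub>v h) $ 0 = (\<Sum>j\<in>{0..<\<gamma>*2}. (M1 * (S * P1)) $$ (0, j) * h $ j)"
        using dims hd by (simp add: scalar_prod_def)
      also have "\<dots> = (\<Sum>j<2*\<gamma>. Vm \<gamma> (c ! Suc (j div 2)) $$ (0, j mod 2) *
             a ((if j mod 2 = 0 then 1 else -1) * x + Bv (b (Suc (j div 2))) $ (j mod 2)))"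
        by (simp only: atLeast0LessThan mult.commute[of \<gamma> 2]) (rule sum.cong, auto simp: Qi hi)
      also have "\<dots> = (\<Sum>i<\<gamma>. c ! Suc i * (x + b (Suc i))^\<gamma>)"
      proof (subst pair_sum, rule sum.cong)
        fix i assume "i \<in> {..<\<gamma>}"
        have key: "c ! Suc i * a (x + b (Suc i)) + c ! Suc i * (-1)^\<gamma> * a (- (x + b (Suc i))) = c ! Suc i * (x + b (Suc i))^\<gamma>"
        proof -
          have "c ! Suc i * a (x + b (Suc i)) + c ! Suc i * (-1)^\<gamma> * a (- (x + b (Suc i)))
             = c ! Suc i * (a (x + b (Suc i)) + (-1)^\<gamma> * a (- (x + b (Suc i))))" by (simp only: algebra_simps)
          also have "\<dots> = c ! Suc i * (x + b (Suc i))^\<gamma>" by (simp only: a pow_split[OF g])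
          finally show ?thesis .
        qed
        then show "Vm \<gamma> (c ! Suc (2 * i div 2)) $$ (0, 2 * i mod 2) *
             a ((if 2 * i mod 2 = 0 then 1 else -1) * x + Bv (b (Suc (2 * i div 2))) $ (2 * i mod 2)) +
            Vm \<gamma> (c ! Suc ((2 * i + 1) div 2)) $$ (0, (2 * i + 1) mod 2) *
             a ((if (2 * i + 1) mod 2 = 0 then 1 else -1) * x + Bv (b (Suc ((2 * i + 1) div 2))) $ ((2 * i + 1) mod 2))
            = c ! Suc i * (x + b (Suc i))^\<gamma>"
        proof -
          have d: "2 * i div 2 = i" "2 * i mod 2 = 0" "(2 * i + 1) div 2 = i" "(2 * i + 1) mod 2 = 1" by simp_all
          have v: "Vm \<gamma> cc $$ (0, 0) = cc" "Vm \<gamma> cc $$ (0, 1) = cc * (-1)^\<gamma>" for cc by (simp_all add: Vm_def)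
          have w: "Bv bb $ 0 = bb" "Bv bb $ 1 = - bb" for bb by (simp_all add: Bv_def)
          have z: "(1::real) * x + bb = x + bb" "(-1) * x + - bb = - (x + bb)" for bb by simp_all
          show ?thesis by (simp only: d v w simp_thms one_neq_zero if_True if_False z) (rule key)
        qed
      qed simp
      also have "\<dots> = (\<Sum>i=1..\<gamma>. c!i * (x + b i)^\<gamma>)" by (simp only: sum_shift1)
      finally show ?thesis .
    qed
    show ?thesis unfolding out bias
      by (rule eq_vecI) (use main dims in auto)
  qed
  show ?thesis using part1 part2 by blast
qed



lemma ident:
  fixes \<gamma> :: nat and b :: "nat \<Rightarrow> real" and c :: "real list"
  assumes g: "\<gamma> \<ge> 1"
  and h: "\<forall>k \<in> {0..\<gamma>}. (if k = \<gamma> then c ! 0 else 0) + (\<Sum>i = 1..\<gamma>. c ! i * b i ^ k)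
                        = (if k = \<gamma> - 1 then 1 / real \<gamma> else 0)"
  shows "c!0 + (\<Sum>i=1..\<gamma>. c!i * (x + b i)^\<gamma>) = x"
proof -
  have hk: "(\<Sum>i = 1..\<gamma>. c ! i * b i ^ k) = (if k = \<gamma> - 1 then 1 / real \<gamma> else 0) - (if k = \<gamma> then c ! 0 else 0)"
    if "k \<le> \<gamma>" for k
  proof -
    have "(if k = \<gamma> then c ! 0 else 0) + (\<Sum>i = 1..\<gamma>. c ! i * b i ^ k) = (if k = \<gamma> - 1 then 1 / real \<gamma> else 0)"
      using h that by auto
    then show ?thesis by linarith
  qed
  have "(\<Sum>i=1..\<gamma>. c!i * (x + b i)^\<gamma>) = (\<Sum>i=1..\<gamma>. c!i * (\<Sum>k\<le>\<gamma>. of_nat (\<gamma> choose k) * b i ^ k * x ^ (\<gamma> - k)))"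
  proof (rule sum.cong)
    fix i
    have "(x + b i)^\<gamma> = (b i + x)^\<gamma>" by (simp add: add.commute)
    then show "c!i * (x + b i)^\<gamma> = c!i * (\<Sum>k\<le>\<gamma>. of_nat (\<gamma> choose k) * b i ^ k * x ^ (\<gamma> - k))"
      by (simp only: binomial_ring)
  qed simp
  also have "\<dots> = (\<Sum>k\<le>\<gamma>. of_nat (\<gamma> choose k) * x ^ (\<gamma> - k) * (\<Sum>i = 1..\<gamma>. c ! i * b i ^ k))"
    by (simp add: sum_distrib_left sum_distrib_right mult_ac) (rule sum.swap)
  also have "\<dots> = (\<Sum>k\<le>\<gamma>. (if k = \<gamma> - 1 then of_nat (\<gamma> choose k) * x ^ (\<gamma> - k) / real \<gamma> else 0)
                        - (if k = \<gamma> then of_nat (\<gamma> choose k) * x ^ (\<gamma> - k) * c ! 0 else 0))"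
  proof (rule sum.cong)
    fix k assume "k \<in> {..\<gamma>}"
    then have k: "k \<le> \<gamma>" by simp
    show "of_nat (\<gamma> choose k) * x ^ (\<gamma> - k) * (\<Sum>i = 1..\<gamma>. c ! i * b i ^ k) =
      (if k = \<gamma> - 1 then of_nat (\<gamma> choose k) * x ^ (\<gamma> - k) / real \<gamma> else 0)
                        - (if k = \<gamma> then of_nat (\<gamma> choose k) * x ^ (\<gamma> - k) * c ! 0 else 0)"
      unfolding hk[OF k] using g by (auto simp: algebra_simps)
  qed simp
  also have "\<dots> = of_nat (\<gamma> choose (\<gamma> - 1)) * x ^ (\<gamma> - (\<gamma> - 1)) / real \<gamma> - c ! 0"
    by (simp add: sum_subtractf)
  also have "\<dots> = x - c ! 0"
    using g binomial_symmetric[of 1 \<gamma>] by simp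
  finally show ?thesis by simp
qed

lemma sum2: "(\<Sum>i=0..<(2::nat). f i) = f 0 + (f 1 :: real)" by (simp add: numeral_2_eq_2)

lemma I_real: "(g::nat) \<ge> 1 \<Longrightarrow> (\<And>x. a x = (max x 0) ^ g) \<Longrightarrow>
   realize a (I_ann g) (vec 1 (\<lambda>_. x)) = vec 1 (\<lambda>_. x ^ g)"
proof -
  assume g: "g \<ge> 1" and a: "\<And>x. a x = (max x 0) ^ g"
  have "max x 0 ^ g + (-1)^g * max (-x) 0 ^ g = x ^ g"
  proof (cases "x \<ge> 0")
    case True then show ?thesis using g by (simp add: max_def)
  next
    case False
    have "(-1)^g * (-x)^g = x^g" by (simp add: power_mult_distrib[symmetric])
    then show ?thesis using False g by (simp add: max_def)
  qed
  then show ?thesis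
    by (auto simp: I_ann_def a scalar_prod_def sum2 intro!: eq_vecI)
qed


theorem mainTheorem10:
  fixes \<gamma> :: nat and b :: "nat \<Rightarrow> real" and a :: "real \<Rightarrow> real"
  assumes "\<gamma> \<ge> 1" and "\<gamma> \<noteq> 1"
    and "\<And>i j. 1 \<le> i \<Longrightarrow> i < j \<Longrightarrow> j \<le> \<gamma> \<Longrightarrow> b i < b j"
    and "continuous_on UNIV a"
    and "\<And>x. a x = (max x 0) ^ \<gamma>"
  shows "(\<forall>x. realize a (I_ann \<gamma>) (vec 1 (\<lambda>_. x)) = vec 1 (\<lambda>_. x ^ \<gamma>))
    \<and> (\<exists>!c :: real list. length c = \<gamma> + 1 \<and>
          (\<forall>k \<in> {0..\<gamma>}. (if k = \<gamma> then c ! 0 else 0) + (\<Sum>i = 1..\<gamma>. c ! i * b i ^ k)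
                        = (if k = \<gamma> - 1 then 1 / real \<gamma> else 0)))
    \<and> (\<forall>c :: real list. length c = \<gamma> + 1 \<and>
          (\<forall>k \<in> {0..\<gamma>}. (if k = \<gamma> then c ! 0 else 0) + (\<Sum>i = 1..\<gamma>. c ! i * b i ^ k)
                        = (if k = \<gamma> - 1 then 1 / real \<gamma> else 0)) \<longrightarrow>
        (\<forall>i \<in> {1..\<gamma>}. is_ann (I_ann \<gamma>) \<and> is_ann (affine1 1 (b i))
              \<and> ann_in (I_ann \<gamma>) = ann_out (affine1 1 (b i))
              \<and> is_ann (scal_ann (c ! i) (comp_ann (I_ann \<gamma>) (affine1 1 (b i))))
              \<and> ann_dims (scal_ann (c ! i) (comp_ann (I_ann \<gamma>) (affine1 1 (b i)))) = [1, 2, 1])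
        \<and> is_ann (Psi_ann \<gamma> b c)
        \<and> ann_dims (Psi_ann \<gamma> b c) = [1, 2 * \<gamma>, 1]
        \<and> continuous_on UNIV (\<lambda>x. realize a (Psi_ann \<gamma> b c) (vec 1 (\<lambda>_. x)) $ 0)
        \<and> (\<forall>x. realize a (Psi_ann \<gamma> b c) (vec 1 (\<lambda>_. x)) = vec 1 (\<lambda>_. x)))"
proof -
  note g = assms(1) and dist = assms(3) and aa = assms(5)
  have P1: "\<forall>x. realize a (I_ann \<gamma>) (vec 1 (\<lambda>_. x)) = vec 1 (\<lambda>_. x ^ \<gamma>)"
  proof
    fix x show "realize a (I_ann \<gamma>) (vec 1 (\<lambda>_. x)) = vec 1 (\<lambda>_. x ^ \<gamma>)" by (rule I_real[OF g aa])
  qed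
  have P2: "\<exists>!c :: real list. length c = \<gamma> + 1 \<and>
          (\<forall>k \<in> {0..\<gamma>}. (if k = \<gamma> then c ! 0 else 0) + (\<Sum>i = 1..\<gamma>. c ! i * b i ^ k)
                        = (if k = \<gamma> - 1 then 1 / real \<gamma> else 0))"
    by (rule ex1_c[OF g dist])
  have Iann: "is_ann (I_ann \<gamma>)"
    by (auto simp: is_ann_def ann_dims_def I_ann_def less_Suc_eq numeral_2_eq_2)
  have Aann: "is_ann (affine1 1 bb)" for bb
    by (simp add: is_ann_def ann_dims_def affine1_def affine_ann_def)
  have io: "ann_in (I_ann \<gamma>) = ann_out (affine1 1 bb)" for bb
    by (simp add: ann_in_def ann_out_def I_ann_def affine1_def affine_ann_def)
  have Phiann: "is_ann (scal_ann cc (comp_ann (I_ann \<gamma>) (affine1 1 bb)))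
     \<and> ann_dims (scal_ann cc (comp_ann (I_ann \<gamma>) (affine1 1 bb))) = [1, 2, 1]" for cc bb
    unfolding Phi_eq
    by (auto simp: is_ann_def ann_dims_def Wh_def Bv_def Vm_def less_Suc_eq numeral_2_eq_2)
  have P3: "length c = \<gamma> + 1 \<and>
          (\<forall>k \<in> {0..\<gamma>}. (if k = \<gamma> then c ! 0 else 0) + (\<Sum>i = 1..\<gamma>. c ! i * b i ^ k)
                        = (if k = \<gamma> - 1 then 1 / real \<gamma> else 0)) \<longrightarrow>
        (\<forall>i \<in> {1..\<gamma>}. is_ann (I_ann \<gamma>) \<and> is_ann (affine1 1 (b i))
              \<and> ann_in (I_ann \<gamma>) = ann_out (affine1 1 (b i))
              \<and> is_ann (scal_ann (c ! i) (comp_ann (I_ann \<gamma>) (affine1 1 (b i))))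
              \<and> ann_dims (scal_ann (c ! i) (comp_ann (I_ann \<gamma>) (affine1 1 (b i)))) = [1, 2, 1])
        \<and> is_ann (Psi_ann \<gamma> b c)
        \<and> ann_dims (Psi_ann \<gamma> b c) = [1, 2 * \<gamma>, 1]
        \<and> continuous_on UNIV (\<lambda>x. realize a (Psi_ann \<gamma> b c) (vec 1 (\<lambda>_. x)) $ 0)
        \<and> (\<forall>x. realize a (Psi_ann \<gamma> b c) (vec 1 (\<lambda>_. x)) = vec 1 (\<lambda>_. x))" for c
  proof
    assume hc: "length c = \<gamma> + 1 \<and>
          (\<forall>k \<in> {0..\<gamma>}. (if k = \<gamma> then c ! 0 else 0) + (\<Sum>i = 1..\<gamma>. c ! i * b i ^ k)
                        = (if k = \<gamma> - 1 then 1 / real \<gamma> else 0))"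
    have nm: "is_ann (Psi_ann \<gamma> b c) \<and> ann_dims (Psi_ann \<gamma> b c) = [1, 2 * \<gamma>, 1]
     \<and> (\<forall>x. realize a (Psi_ann \<gamma> b c) (vec 1 (\<lambda>_. x)) = vec 1 (\<lambda>_. c!0 + (\<Sum>i=1..\<gamma>. c!i * (x + b i)^\<gamma>)))"
      by (rule net_main[OF g aa])
    have R: "realize a (Psi_ann \<gamma> b c) (vec 1 (\<lambda>_. x)) = vec 1 (\<lambda>_. x)" for x
    proof -
      have e1: "realize a (Psi_ann \<gamma> b c) (vec 1 (\<lambda>_. x)) = vec 1 (\<lambda>_. c!0 + (\<Sum>i=1..\<gamma>. c!i * (x + b i)^\<gamma>))"
        using nm by (elim conjE allE)
      have e2: "c!0 + (\<Sum>i=1..\<gamma>. c!i * (x + b i)^\<gamma>) = x"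
        by (rule ident[OF g]) (use hc in \<open>elim conjE\<close>)
      show ?thesis unfolding e1 e2 ..
    qed
    have C: "continuous_on UNIV (\<lambda>x. realize a (Psi_ann \<gamma> b c) (vec 1 (\<lambda>_. x)) $ 0)"
    proof (rule continuous_on_cong[THEN iffD2, OF refl _ continuous_on_id])
      fix x :: real
      show "realize a (Psi_ann \<gamma> b c) (vec 1 (\<lambda>_. x)) $ 0 = x" by (subst R) simp
    qed
    show "(\<forall>i \<in> {1..\<gamma>}. is_ann (I_ann \<gamma>) \<and> is_ann (affine1 1 (b i))
              \<and> ann_in (I_ann \<gamma>) = ann_out (affine1 1 (b i))
              \<and> is_ann (scal_ann (c ! i) (comp_ann (I_ann \<gamma>) (affine1 1 (b i))))
              \<and> ann_dims (scal_ann (c ! i) (comp_ann (I_ann \<gamma>) (affine1 1 (b i)))) = [1, 2, 1])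
        \<and> is_ann (Psi_ann \<gamma> b c)
        \<and> ann_dims (Psi_ann \<gamma> b c) = [1, 2 * \<gamma>, 1]
        \<and> continuous_on UNIV (\<lambda>x. realize a (Psi_ann \<gamma> b c) (vec 1 (\<lambda>_. x)) $ 0)
        \<and> (\<forall>x. realize a (Psi_ann \<gamma> b c) (vec 1 (\<lambda>_. x)) = vec 1 (\<lambda>_. x))"
    proof (intro conjI)
      show "\<forall>i \<in> {1..\<gamma>}. is_ann (I_ann \<gamma>) \<and> is_ann (affine1 1 (b i))
              \<and> ann_in (I_ann \<gamma>) = ann_out (affine1 1 (b i))
              \<and> is_ann (scal_ann (c ! i) (comp_ann (I_ann \<gamma>) (affine1 1 (b i))))
              \<and> ann_dims (scal_ann (c ! i) (comp_ann (I_ann \<gamma>) (affine1 1 (b i)))) = [1, 2, 1]"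
        using Iann Aann io Phiann by simp
      show "is_ann (Psi_ann \<gamma> b c)" using nm by (elim conjE)
      show "ann_dims (Psi_ann \<gamma> b c) = [1, 2 * \<gamma>, 1]" using nm by (elim conjE)
      show "continuous_on UNIV (\<lambda>x. realize a (Psi_ann \<gamma> b c) (vec 1 (\<lambda>_. x)) $ 0)" by (rule C)
      show "\<forall>x. realize a (Psi_ann \<gamma> b c) (vec 1 (\<lambda>_. x)) = vec 1 (\<lambda>_. x)" using R by (rule allI)
    qed
  qed
  show ?thesis
  proof (intro conjI)
    show "\<forall>x. realize a (I_ann \<gamma>) (vec 1 (\<lambda>_. x)) = vec 1 (\<lambda>_. x ^ \<gamma>)" by (rule P1)
  next
    show "\<exists>!c :: real list. length c = \<gamma> + 1 \<and>
          (\<forall>k \<in> {0..\<gamma>}. (if k = \<gamma> then c ! 0 else 0) + (\<Sum>i = 1..\<gamma>. c ! i * b i ^ k)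
                        = (if k = \<gamma> - 1 then 1 / real \<gamma> else 0))" by (rule P2)
  qed (intro allI P3)
qed

end
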